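(* Let $n\ge 5$. If $x\in\mathrm{Sort}_n(123,321)$, then $\mathrm{ind}_x(n)<\min(\mathrm{ind}_x(1),\mathrm{ind}_x(2))$, i.e. $n$ appears to the left of both $1$ and $2$ in $x$.
   Context: $\mathrm{ind}_x(a)$ is the position of the value $a$ in $x$. A permutation contains a pattern $p$ if it has a subsequence order-isomorphic to $p$; otherwise it avoids $p$. For a set $T$ of patterns, the map $s_T$ is defined as follows: the entries of the input permutation are read from left to right, with an initially empty stack. At each step, if the input is nonempty and pushing the next input entry onto the stack produces a stack whose contents, read from top to bottom, avoid every pattern in $T$, that entry is pushed; otherwise the top entry of the stack is popped and appended to the output. When the input is exhausted, the remaining stack entries are popped one at a time to the output. Write $s_{\sigma,\tau}=s_{\{\sigma,\tau\}}$ and $s=s_{\{21\}}$ (West's stack-sorting map). $\mathrm{Sort}_n(\sigma,\tau)$ is the set of $x\in S_n$ with $s(s_{\sigma,\tau}(x))=12\cdots n$. *)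

theory Defs
  imports Main "HOL-Library.Sublist"
begin

definition is_perm :: "nat \<Rightarrow> nat list \<Rightarrow> bool" where
  "is_perm n x \<longleftrightarrow> distinct x \<and> set x = {1..n}"

definition ind :: "nat list \<Rightarrow> nat \<Rightarrow> nat" where
  "ind x a = (THE i. i < length x \<and> x ! i = a)"

definition contains :: "nat list \<Rightarrow> nat list \<Rightarrow> bool" where
  "contains w p \<longleftrightarrow> (\<exists>ys. subseq ys w \<and> length ys = length p \<and>
      (\<forall>i<length p. \<forall>j<length p. ys ! i < ys ! j \<longleftrightarrow> p ! i < p ! j))"

definition avoids_all :: "nat list list \<Rightarrow> nat list \<Rightarrow> bool" where
  "avoids_all T w \<longleftrightarrow> (\<forall>p\<in>set T. \<not> contains w p)"

text \<open>Arguments: patterns T, remaining input,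
  stack (head = top, so the list reads the stack top to bottom).
  The case "push forbidden but stack empty" cannot occur when every pattern has
  length at least 2; there we push anyway (arbitrary convention, irrelevant here).\<close>
function stk :: "nat list list \<Rightarrow> nat list \<Rightarrow> nat list \<Rightarrow> nat list" where
  "stk T [] st = st"
| "stk T (a # inp) st =
     (if avoids_all T (a # st) then stk T inp (a # st)
      else (case st of [] \<Rightarrow> stk T inp [a]
                     | b # st' \<Rightarrow> b # stk T (a # inp) st'))"
  by pat_completeness auto
termination
  by (relation "measure (\<lambda>(T, inp, st). 2 * length inp + length st)") auto

definition sT :: "nat list list \<Rightarrow> nat list \<Rightarrow> nat list" where
  "sT T x = stk T x []"

definition west :: "nat list \<Rightarrow> nat list" where
  "west x = sT [[2,1]] x"

definition Sort :: "nat \<Rightarrow> nat list \<Rightarrow> nat list \<Rightarrow> nat list set" where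
  "Sort n \<sigma> \<tau> = {x. is_perm n x \<and> west (sT [\<sigma>, \<tau>] x) = [1..<n+1]}"

end

theory Submission
  imports Defs "HOL-Library.Multiset"
begin


fun pc :: "nat list list \<Rightarrow> nat \<Rightarrow> nat list \<Rightarrow> nat" where
  "pc T a [] = 0"
| "pc T a (b # st) = (if avoids_all T (a # b # st) then 0 else Suc (pc T a st))"

lemma stk_pc: "stk T (a # inp) st = take (pc T a st) st @ stk T inp (a # drop (pc T a st) st)"
  by (induction st) auto

fun St :: "nat list list \<Rightarrow> nat list \<Rightarrow> nat list \<Rightarrow> nat \<Rightarrow> nat list" where
  "St T [] st j = st"
| "St T (a # inp) st 0 = a # drop (pc T a st) st"
| "St T (a # inp) st (Suc j) = St T inp (a # drop (pc T a st) st) j"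

lemma St_rec: "Suc j < length x \<Longrightarrow>
  St T x st (Suc j) = x ! Suc j # drop (pc T (x ! Suc j) (St T x st j)) (St T x st j)"
proof (induction x arbitrary: st j)
  case Nil then show ?case by simp
next
  case (Cons a inp)
  show ?case
  proof (cases j)
    case 0 then show ?thesis using Cons.prems by (cases inp) auto
  next
    case (Suc j') then show ?thesis using Cons by auto
  qed
qed

lemma pc_le: "pc T a st \<le> length st"
  by (induction st) auto

lemma mset_stk: "mset (stk T inp st) = mset inp + mset st"
proof (induction inp arbitrary: st)
  case Nil then show ?case by simp
next
  case (Cons a inp)
  have e: "mset st = mset (take (pc T a st) st) + mset (drop (pc T a st) st)"
    by (metis append_take_drop_id mset_append)
  show ?case by (subst stk_pc) (simp add: Cons.IH e ac_simps)
qed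

lemma set_St: "j < length x \<Longrightarrow> set (St T x st j) \<subseteq> set st \<union> set (take (Suc j) x)"
proof (induction x arbitrary: st j)
  case Nil then show ?case by simp
next
  case (Cons a inp)
  show ?case
  proof (cases j)
    case 0 then show ?thesis by (auto dest: in_set_dropD)
  next
    case (Suc j')
    have "set (St T inp (a # drop (pc T a st) st) j') \<subseteq> set (a # drop (pc T a st) st) \<union> set (take (Suc j') inp)"
      using Cons.IH[of j' "a # drop (pc T a st) st"] Cons.prems Suc by auto
    moreover have "set (drop (pc T a st) st) \<subseteq> set st" by (rule set_drop_subset)
    ultimately show ?thesis using Suc by auto
  qed
qed

lemma top_St: "j < length x \<Longrightarrow> hd (St T x st j) = x ! j \<and> St T x st j \<noteq> []"
proof (induction x arbitrary: st j)
  case Nil then show ?case by simp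
next
  case (Cons a inp)
  then show ?case by (cases j) auto
qed

lemma distinct_St: "distinct (x @ st) \<Longrightarrow> j < length x \<Longrightarrow> distinct (St T x st j)"
proof (induction x arbitrary: st j)
  case Nil then show ?case by simp
next
  case (Cons a inp)
  have d: "distinct (inp @ (a # drop (pc T a st) st))"
    using Cons.prems(1) by (auto dest: in_set_dropD simp: distinct_drop)
  show ?case
  proof (cases j)
    case 0 then show ?thesis using Cons.prems by (auto dest: in_set_dropD simp: distinct_drop)
  next
    case (Suc j') then show ?thesis using Cons d by auto
  qed
qed

lemma set_stk: "set (stk T inp st) = set inp \<union> set st"
  by (metis mset_stk set_mset_mset set_mset_union)

lemma sub2_split: "u \<in> set A \<Longrightarrow> v \<in> set B \<Longrightarrow> subseq [u, v] (A @ B)"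
  using list_emb_append_mono[of "(=)" "[u]" A "[v]" B] by (simp add: subseq_singleton_left)

lemma sub2_left: "subseq [u, v] B \<Longrightarrow> subseq [u, v] (A @ B)"
  by (rule list_emb_append2)

lemma sub2_right: "subseq [u, v] A \<Longrightarrow> subseq [u, v] (A @ B)"
  using list_emb_append_mono[of "(=)" "[u,v]" A "[]" B] by simp

lemma in_take: "i < j \<Longrightarrow> i < length w \<Longrightarrow> w ! i \<in> set (take j w)"
proof -
  assume a: "i < j" "i < length w"
  then have "take j w ! i = w ! i" "i < length (take j w)" by auto
  then show ?thesis by (metis nth_mem)
qed

lemma in_drop: "k \<le> j \<Longrightarrow> j < length w \<Longrightarrow> w ! j \<in> set (drop k w)"
proof -
  assume a: "k \<le> j" "j < length w"
  then have "drop k w ! (j - k) = w ! j" "j - k < length (drop k w)" by auto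
  then show ?thesis by (metis nth_mem)
qed

lemma sub2_nth: "i < j \<Longrightarrow> j < length w \<Longrightarrow> subseq [w ! i, w ! j] w"
proof -
  assume a: "i < j" "j < length w"
  have "w ! i \<in> set (take j w)" using a by (intro in_take) auto
  moreover have "w ! j \<in> set (drop j w)" using a by (intro in_drop) auto
  ultimately show ?thesis using sub2_split[of "w ! i" "take j w" "w ! j" "drop j w"] by simp
qed

lemma Lc: "i < j \<Longrightarrow> j < length st \<Longrightarrow> subseq [st ! i, st ! j] (stk T inp st)"
proof (induction inp arbitrary: st i j)
  case Nil then show ?case by (simp add: sub2_nth)
next
  case (Cons a inp)
  define k where "k = pc T a st"
  define ns where "ns = a # drop k st"
  have y: "stk T (a # inp) st = take k st @ stk T inp ns" unfolding k_def ns_def by (rule stk_pc)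
  show ?case
  proof (cases "j < k")
    case True
    then have "subseq [take k st ! i, take k st ! j] (take k st)"
      using Cons.prems by (intro sub2_nth) auto
    then show ?thesis using y True Cons.prems by (simp add: sub2_right)
  next
    case jk: False
    show ?thesis
    proof (cases "i < k")
      case True
      have "st ! i \<in> set (take k st)" using True Cons.prems by (intro in_take) auto
      moreover have "st ! j \<in> set (stk T inp ns)"
        using jk Cons.prems in_drop[of k j st] unfolding ns_def set_stk by auto
      ultimately show ?thesis using y by (simp add: sub2_split)
    next
      case False
      have "subseq [ns ! Suc (i - k), ns ! Suc (j - k)] (stk T inp ns)"
        using Cons.prems False jk unfolding ns_def by (intro Cons.IH) auto
      moreover have "ns ! Suc (i - k) = st ! i" "ns ! Suc (j - k) = st ! j"
        using False jk Cons.prems unfolding ns_def by auto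
      ultimately show ?thesis using y by (simp add: sub2_left)
    qed
  qed
qed

lemma La: "distinct (x @ st) \<Longrightarrow> j < length x \<Longrightarrow> e \<in> set st \<Longrightarrow> e \<in> set (St T x st j)
   \<Longrightarrow> subseq [x ! j, e] (stk T x st)"
proof (induction x arbitrary: st j)
  case Nil then show ?case by simp
next
  case (Cons a inp)
  define k where "k = pc T a st"
  define ns where "ns = a # drop k st"
  have y: "stk T (a # inp) st = take k st @ stk T inp ns" unfolding k_def ns_def by (rule stk_pc)
  have dn: "distinct (inp @ ns)" using Cons.prems(1) unfolding ns_def
    by (auto dest: in_set_dropD simp: distinct_drop)
  show ?case
  proof (cases j)
    case 0
    then have "e \<in> set ns" "e \<noteq> a" using Cons.prems unfolding ns_def k_def by auto
    then have "e \<in> set (tl ns)" unfolding ns_def by auto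
    then obtain q where q: "q < length (tl ns)" "tl ns ! q = e" by (metis in_set_conv_nth)
    then have "subseq [ns ! 0, ns ! Suc q] (stk T inp ns)"
      by (intro Lc) (auto simp: ns_def)
    then show ?thesis using q 0 y by (simp add: ns_def sub2_left)
  next
    case (Suc j')
    have "set (St T inp ns j') \<subseteq> set ns \<union> set (take (Suc j') inp)"
      using Suc Cons.prems by (intro set_St) auto
    moreover have "e \<notin> set inp" using Cons.prems by auto
    moreover have "e \<in> set (St T inp ns j')" using Cons.prems Suc by (simp add: ns_def k_def)
    ultimately have "e \<in> set ns" by (auto dest: in_set_takeD)
    then have "subseq [inp ! j', e] (stk T inp ns)"
      using Cons.IH[of ns j'] dn Suc Cons.prems \<open>e \<in> set (St T inp ns j')\<close> by auto
    then show ?thesis using Suc y by (simp add: sub2_left)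
  qed
qed

lemma Lb: "distinct (x @ st) \<Longrightarrow> j < length x \<Longrightarrow> e \<in> set st \<Longrightarrow> e \<notin> set (St T x st j)
   \<Longrightarrow> subseq [e, x ! j] (stk T x st)"
proof (induction x arbitrary: st j)
  case Nil then show ?case by simp
next
  case (Cons a inp)
  define k where "k = pc T a st"
  define ns where "ns = a # drop k st"
  have y: "stk T (a # inp) st = take k st @ stk T inp ns" unfolding k_def ns_def by (rule stk_pc)
  have dn: "distinct (inp @ ns)" using Cons.prems(1) unfolding ns_def
    by (auto dest: in_set_dropD simp: distinct_drop)
  have tk: "e \<notin> set ns \<Longrightarrow> e \<in> set (take k st)"
    using Cons.prems(3) unfolding ns_def by (metis append_take_drop_id list.set_intros(2) Un_iff set_append)
  show ?case
  proof (cases j)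
    case 0
    then have "e \<notin> set ns" using Cons.prems unfolding ns_def k_def by auto
    then show ?thesis using tk 0 y by (simp add: sub2_split set_stk ns_def)
  next
    case (Suc j')
    have e2: "e \<notin> set (St T inp ns j')" using Cons.prems Suc by (simp add: ns_def k_def)
    show ?thesis
    proof (cases "e \<in> set ns")
      case True
      then have "subseq [e, inp ! j'] (stk T inp ns)"
        using Cons.IH[of ns j'] dn Suc Cons.prems e2 by auto
      then show ?thesis using Suc y by (simp add: sub2_left)
    next
      case False
      have "inp ! j' \<in> set (stk T inp ns)" using Suc Cons.prems by (simp add: set_stk)
      then show ?thesis using tk[OF False] Suc y by (simp add: sub2_split)
    qed
  qed
qed

lemma Lab: "distinct (x @ st) \<Longrightarrow> i < j \<Longrightarrow> j < length x \<Longrightarrow>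
   (x ! i \<in> set (St T x st j) \<longrightarrow> subseq [x ! j, x ! i] (stk T x st)) \<and>
   (x ! i \<notin> set (St T x st j) \<longrightarrow> subseq [x ! i, x ! j] (stk T x st))"
proof (induction x arbitrary: st i j)
  case Nil then show ?case by simp
next
  case (Cons a inp)
  define k where "k = pc T a st"
  define ns where "ns = a # drop k st"
  have y: "stk T (a # inp) st = take k st @ stk T inp ns" unfolding k_def ns_def by (rule stk_pc)
  have dn: "distinct (inp @ ns)" using Cons.prems(1) unfolding ns_def
    by (auto dest: in_set_dropD simp: distinct_drop)
  obtain j' where j: "j = Suc j'" using Cons.prems by (cases j) auto
  have S: "St T (a # inp) st j = St T inp ns j'" using j by (simp add: ns_def k_def)
  show ?case
  proof (cases i)
    case 0
    have "a \<in> set ns" by (simp add: ns_def)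
    then show ?thesis using La[OF dn, of j' a T] Lb[OF dn, of j' a T] S 0 j y Cons.prems
      by (auto simp: sub2_left)
  next
    case (Suc i')
    then show ?thesis using Cons.IH[OF dn, of i' j'] S j y Cons.prems
      by (auto simp: sub2_left)
  qed
qed

lemma short_avoids: "(\<forall>p\<in>set T. length w < length p) \<Longrightarrow> avoids_all T w"
  unfolding avoids_all_def contains_def by (auto dest: list_emb_length)

lemma pc_valid: "(\<forall>p\<in>set T. 2 \<le> length p) \<Longrightarrow> avoids_all T (a # drop (pc T a st) st)"
proof (induction st)
  case Nil then show ?case by (intro short_avoids) auto
next
  case (Cons b st) then show ?case by auto
qed

lemma pc_min: "q < pc T a st \<Longrightarrow> \<not> avoids_all T (a # drop q st)"
proof (induction st arbitrary: q)
  case Nil then show ?case by simp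
next
  case (Cons b st) then show ?case
    by (cases q) (auto split: if_splits)
qed

lemma pc_lt: "st \<noteq> [] \<Longrightarrow> (\<forall>p\<in>set T. 3 \<le> length p) \<Longrightarrow> pc T a st < length st"
proof (induction st)
  case Nil then show ?case by simp
next
  case (Cons b st)
  show ?case
  proof (cases st)
    case Nil
    have "avoids_all T [a, b]" using Cons.prems by (intro short_avoids) auto
    then show ?thesis using Nil by simp
  next
    case (Cons c st') then show ?thesis using Cons.IH Cons.prems by auto
  qed
qed

lemma St_valid: "(\<forall>p\<in>set T. 2 \<le> length p) \<Longrightarrow> j < length x \<Longrightarrow> avoids_all T (St T x st j)"
proof (induction x arbitrary: st j)
  case Nil then show ?case by simp
next
  case (Cons a inp) then show ?case by (cases j) (auto intro: pc_valid)
qed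

lemma St0: "x \<noteq> [] \<Longrightarrow> St T x [] 0 = [x ! 0]"
  by (cases x) auto

lemma St_last: "(\<forall>p\<in>set T. 3 \<le> length p) \<Longrightarrow> j < length x \<Longrightarrow> last (St T x [] j) = x ! 0"
proof (induction j)
  case 0 then show ?case by (simp add: St0)
next
  case (Suc j)
  have ne: "St T x [] j \<noteq> []" using Suc.prems top_St[of j x T "[]"] by auto
  have "pc T (x ! Suc j) (St T x [] j) < length (St T x [] j)" using ne Suc.prems by (intro pc_lt) auto
  then show ?case using Suc St_rec[of j x T "[]"] by auto
qed

lemma St_step_sub: "Suc j < length x \<Longrightarrow> set (St T x st (Suc j)) \<subseteq> insert (x ! Suc j) (set (St T x st j))"
  using St_rec[of j x T st] by (auto dest: in_set_dropD)

lemma St_out: "e \<notin> set (St T x st j) \<Longrightarrow> e \<notin> set (drop (Suc j) x) \<Longrightarrow> j \<le> j' \<Longrightarrow> j' < length x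
   \<Longrightarrow> e \<notin> set (St T x st j')"
proof (induction j' arbitrary: )
  case 0 then show ?case by simp
next
  case (Suc j')
  show ?case
  proof (cases "j = Suc j'")
    case True then show ?thesis using Suc by simp
  next
    case False
    then have "e \<notin> set (St T x st j')" using Suc by auto
    moreover have "e \<noteq> x ! Suc j'" using Suc.prems False in_drop[of "Suc j" "Suc j'" x] by auto
    ultimately show ?thesis using St_step_sub[of j' x T st] Suc.prems by auto
  qed
qed

lemma St_stay: "distinct x \<Longrightarrow> i \<le> J \<Longrightarrow> J < length x \<Longrightarrow> (\<forall>j'. i \<le> j' \<and> j' \<le> J \<longrightarrow> x ! i \<in> set (St T x [] j'))
  \<Longrightarrow> St T x [] i = x ! i # U \<Longrightarrow> \<exists>T'. St T x [] J = T' @ x ! i # U"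
proof (induction J)
  case 0 then show ?case by auto
next
  case (Suc J)
  show ?case
  proof (cases "i = Suc J")
    case True then show ?thesis using Suc by auto
  next
    case False
    then obtain T' where T': "St T x [] J = T' @ x ! i # U" using Suc by auto
    have dS: "distinct (St T x [] J)" using Suc.prems by (intro distinct_St) auto
    define k where "k = pc T (x ! Suc J) (St T x [] J)"
    have rec: "St T x [] (Suc J) = x ! Suc J # drop k (T' @ x ! i # U)"
      using St_rec[of J x T "[]"] Suc.prems T' k_def by simp
    have "x ! i \<in> set (St T x [] (Suc J))" using Suc.prems by auto
    moreover have "x ! i \<noteq> x ! Suc J" using Suc.prems False by (simp add: nth_eq_iff_index_eq)
    ultimately have mem: "x ! i \<in> set (drop k (T' @ x ! i # U))" using rec by simp
    have "k \<le> length T'"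
    proof (rule ccontr)
      assume "\<not> k \<le> length T'"
      then obtain r where "k = Suc (length T' + r)" by (metis less_iff_Suc_add not_le)
      then have "drop k (T' @ x ! i # U) = drop r U" by simp
      then have "x ! i \<in> set U" using mem by (auto dest: in_set_dropD)
      then show False using dS T' by simp
    qed
    then have "St T x [] (Suc J) = (x ! Suc J # drop k T') @ x ! i # U" using rec by simp
    then show ?thesis by blast
  qed
qed



abbreviation valid :: "nat list \<Rightarrow> bool" where
  "valid w \<equiv> avoids_all [[1,2,3],[3,2,1]] w"

lemma c123: "contains w [1,2,3] \<longleftrightarrow> (\<exists>u v t. subseq [u,v,t] w \<and> u < v \<and> v < t)"
proof
  assume "contains w [1,2,3]"
  then obtain ys where ys: "subseq ys w" "length ys = 3"
    "\<forall>i<3. \<forall>j<3. ys ! i < ys ! j \<longleftrightarrow> [1,2,3::nat] ! i < [1,2,3::nat] ! j"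
    unfolding contains_def by auto
  then obtain u v t where "ys = [u,v,t]"
    by (metis (no_types, lifting) length_0_conv length_Suc_conv numeral_3_eq_3)
  then show "\<exists>u v t. subseq [u,v,t] w \<and> u < v \<and> v < t"
    using ys(1) ys(3)[rule_format, of 0 1] ys(3)[rule_format, of 1 2] by auto
next
  assume "\<exists>u v t. subseq [u,v,t] w \<and> u < v \<and> v < t"
  then obtain u v t where h: "subseq [u,v,t] w" "u < v" "v < t" by blast
  show "contains w [1,2,3]" unfolding contains_def
    by (rule exI[of _ "[u,v,t]"]) (use h in \<open>auto simp: less_Suc_eq numeral_3_eq_3\<close>)
qed

lemma c321: "contains w [3,2,1] \<longleftrightarrow> (\<exists>u v t. subseq [u,v,t] w \<and> v < u \<and> t < v)"
proof
  assume "contains w [3,2,1]"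
  then obtain ys where ys: "subseq ys w" "length ys = 3"
    "\<forall>i<3. \<forall>j<3. ys ! i < ys ! j \<longleftrightarrow> [3,2,1::nat] ! i < [3,2,1::nat] ! j"
    unfolding contains_def by auto
  then obtain u v t where "ys = [u,v,t]"
    by (metis (no_types, lifting) length_0_conv length_Suc_conv numeral_3_eq_3)
  then show "\<exists>u v t. subseq [u,v,t] w \<and> v < u \<and> t < v"
    using ys(1) ys(3)[rule_format, of 1 0] ys(3)[rule_format, of 2 1] by auto
next
  assume "\<exists>u v t. subseq [u,v,t] w \<and> v < u \<and> t < v"
  then obtain u v t where h: "subseq [u,v,t] w" "v < u" "t < v" by blast
  show "contains w [3,2,1]" unfolding contains_def
    by (rule exI[of _ "[u,v,t]"]) (use h in \<open>auto simp: less_Suc_eq numeral_3_eq_3\<close>)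
qed

lemma c21: "contains w [2,1] \<longleftrightarrow> (\<exists>u v. subseq [u,v] w \<and> v < u)"
proof
  assume "contains w [2,1]"
  then obtain ys where ys: "subseq ys w" "length ys = 2"
    "\<forall>i<2. \<forall>j<2. ys ! i < ys ! j \<longleftrightarrow> [2,1::nat] ! i < [2,1::nat] ! j"
    unfolding contains_def by auto
  then obtain u v where "ys = [u,v]"
    by (metis (no_types, lifting) length_0_conv length_Suc_conv numeral_2_eq_2)
  then show "\<exists>u v. subseq [u,v] w \<and> v < u"
    using ys(1) ys(3)[rule_format, of 1 0] by auto
next
  assume "\<exists>u v. subseq [u,v] w \<and> v < u"
  then obtain u v where h: "subseq [u,v] w" "v < u" by blast
  show "contains w [2,1]" unfolding contains_def
    by (rule exI[of _ "[u,v]"]) (use h in \<open>auto simp: less_Suc_eq numeral_2_eq_2\<close>)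
qed

lemma valid_iff: "valid w \<longleftrightarrow> \<not> (\<exists>u v t. subseq [u,v,t] w \<and> u < v \<and> v < t) \<and>
   \<not> (\<exists>u v t. subseq [u,v,t] w \<and> v < u \<and> t < v)"
  unfolding avoids_all_def using c123 c321 by auto

lemma cons3: "subseq [u,v,t] (a # w) \<longleftrightarrow> (u = a \<and> subseq [v,t] w) \<or> subseq [u,v,t] w"
  by (auto dest: subseq_Cons')

lemma valid_cons: "valid (a # w) \<longleftrightarrow> valid w \<and>
   (\<forall>v t. subseq [v,t] w \<longrightarrow> \<not> (a < v \<and> v < t) \<and> \<not> (t < v \<and> v < a))"
  unfolding valid_iff cons3 by blast

lemma valid_short: "length w \<le> 2 \<Longrightarrow> valid w"
  unfolding valid_iff by (auto dest: list_emb_length)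

lemma sub2_3: "subseq [v,t] [p,q,r] \<longleftrightarrow> (v = p \<and> t = q) \<or> (v = p \<and> t = r) \<or> (v = q \<and> t = r)"
  by (auto split: if_splits)

lemma sub2_2: "subseq [v,t] [p,q] \<longleftrightarrow> (v = p \<and> t = q)"
  by (auto split: if_splits)

lemma PL1:
  assumes "m < a" "\<forall>u\<in>set U. m < u" "distinct U" "valid (m # U)" "\<not> valid (a # m # U)"
  shows "\<exists>u1 u2. U = [u1, u2] \<and> u2 < u1 \<and> u1 < a"
proof (cases U)
  case Nil then show ?thesis using assms valid_short[of "[a,m]"] by simp
next
  case (Cons u1 U1)
  show ?thesis
  proof (cases U1)
    case Nil
    have "valid [a, m, u1]" unfolding valid_cons[of a]
      using assms Cons Nil by (auto simp: valid_short sub2_2)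
    then show ?thesis using assms Cons Nil by simp
  next
    case (Cons u2 U2)
    note C = \<open>U = u1 # U1\<close> Cons
    show ?thesis
    proof (cases U2)
      case Nil
      have "\<not> (m < u1 \<and> u1 < u2)" using assms(4) C Nil unfolding valid_cons[of m] by auto
      then have "u2 < u1" using assms(2,3) C Nil by auto
      moreover have "u1 < a"
      proof (rule ccontr)
        assume "\<not> u1 < a"
        then have "valid (a # m # U)" unfolding valid_cons[of a] using assms C Nil \<open>u2 < u1\<close>
          by (auto simp: sub2_3)
        then show False using assms by simp
      qed
      ultimately show ?thesis using C Nil by simp
    next
      case (Cons u3 U3)
      have s: "subseq [u1,u2,u3] U" "subseq [u1, u2] U" "subseq [u2, u3] U" using C Cons by auto
      have mu: "m < u1" "m < u2" "m < u3" "u1 \<noteq> u2" "u2 \<noteq> u3" using assms C Cons by auto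
      have "valid U" using assms(4) unfolding valid_cons[of m] by blast
      then show ?thesis using assms(4) s mu unfolding valid_cons[of m] valid_iff[of U]
        by (metis linorder_neqE_nat)
    qed
  qed
qed

lemma PL2:
  assumes "\<forall>s\<in>set S. s < n" "distinct S" "valid (n # S)"
  shows "length S \<le> 2 \<and> (\<forall>s1 s2. S = [s1, s2] \<longrightarrow> s1 < s2)"
proof -
  have vS: "valid S" and pr: "\<And>v t. subseq [v,t] S \<Longrightarrow> \<not> (t < v \<and> v < n)"
    using assms(3) unfolding valid_cons[of n] by auto
  have "length S \<le> 2"
  proof (rule ccontr)
    assume "\<not> length S \<le> 2"
    then obtain s1 s2 s3 r where S: "S = s1 # s2 # s3 # r"
      by (metis One_nat_def Suc_1 Suc_le_length_iff not_less_eq_eq)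
    have s: "subseq [s1,s2,s3] S" "subseq [s1, s2] S" "subseq [s2, s3] S" using S by auto
    have mu: "s1 < n" "s2 < n" "s3 < n" "s1 \<noteq> s2" "s2 \<noteq> s3" using assms S by auto
    show False using vS pr s mu unfolding valid_iff[of S] by (metis linorder_neqE_nat)
  qed
  moreover have "\<forall>s1 s2. S = [s1, s2] \<longrightarrow> s1 < s2"
  proof (intro allI impI)
    fix s1 s2 assume S: "S = [s1, s2]"
    then have "s1 < n" "s1 \<noteq> s2" "subseq [s1, s2] S" using assms by auto
    then show "s1 < s2" using pr by (metis linorder_neqE_nat)
  qed
  ultimately show ?thesis by blast
qed

lemma PL3:
  assumes "\<forall>s\<in>set S. s < n" "distinct S" "valid (n # S)" "a < n" "\<not> valid (a # n # S)"
  shows "\<exists>s1 s2. S = [s1, s2] \<and> a < s1 \<and> s1 < s2"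
proof -
  have P: "length S \<le> 2" "\<forall>s1 s2. S = [s1, s2] \<longrightarrow> s1 < s2" using PL2[OF assms(1-3)] by auto
  show ?thesis
  proof (cases S)
    case Nil then show ?thesis using assms valid_short[of "[a,n]"] by simp
  next
    case (Cons s1 S1)
    show ?thesis
    proof (cases S1)
      case Nil
      have "valid [a, n, s1]" unfolding valid_cons[of a]
        using assms Cons Nil by (auto simp: valid_short sub2_2)
      then show ?thesis using assms Cons Nil by simp
    next
      case (Cons s2 S2)
      then have S: "S = [s1, s2]" using P \<open>S = s1 # S1\<close> by (cases S2) auto
      then have "s1 < s2" "s1 < n" "s2 < n" using P assms by auto
      have "a < s1"
      proof (rule ccontr)
        assume "\<not> a < s1"
        then have "valid (a # n # S)" unfolding valid_cons[of a]
          using assms S \<open>s1 < s2\<close> \<open>s1 < n\<close> \<open>s2 < n\<close> by (auto simp: sub2_3)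
        then show False using assms by simp
      qed
      then show ?thesis using S \<open>s1 < s2\<close> by blast
    qed
  qed
qed



lemma sub2_idx: "subseq [u, v] y \<Longrightarrow> \<exists>i j. i < j \<and> j < length y \<and> y ! i = u \<and> y ! j = v"
proof (induction y)
  case Nil then show ?case by simp
next
  case (Cons a y)
  show ?case
  proof (cases "u = a")
    case True
    then have "v \<in> set y" using Cons.prems by (simp add: subseq_singleton_left)
    then obtain j where "j < length y" "y ! j = v" by (metis in_set_conv_nth)
    then show ?thesis using True by (intro exI[of _ 0] exI[of _ "Suc j"]) auto
  next
    case False
    then have "subseq [u, v] y" using Cons.prems by simp
    then obtain i j where "i < j \<and> j < length y \<and> y ! i = u \<and> y ! j = v" using Cons.IH by blast
    then show ?thesis by (intro exI[of _ "Suc i"] exI[of _ "Suc j"]) auto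
  qed
qed

lemma sub2_neq: "distinct y \<Longrightarrow> subseq [u, v] y \<Longrightarrow> u \<noteq> v"
proof -
  assume d: "distinct y" and s: "subseq [u, v] y"
  obtain i j where ij: "i < j" "j < length y" "y ! i = u" "y ! j = v" using sub2_idx[OF s] by blast
  then show "u \<noteq> v" using nth_eq_iff_index_eq[OF d, of i j] by auto
qed

lemma nth_notin_drop: "distinct y \<Longrightarrow> i \<le> j \<Longrightarrow> i < length y \<Longrightarrow> y ! i \<notin> set (drop (Suc j) y)"
proof
  assume d: "distinct y" and ij: "i \<le> j" "i < length y" and m: "y ! i \<in> set (drop (Suc j) y)"
  then obtain k where k: "k < length (drop (Suc j) y)" "drop (Suc j) y ! k = y ! i" by (metis in_set_conv_nth)
  then have "y ! (Suc j + k) = y ! i" "Suc j + k < length y" by auto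
  then show False using nth_eq_iff_index_eq[OF d, of "Suc j + k" i] ij by auto
qed

lemma sub2_sorted: "subseq [b, a] [1..<n+1] \<Longrightarrow> b < a"
proof -
  assume h: "subseq [b, a] [1..<n+1]"
  obtain i j where "i < j" "j < length [1..<n+1]" "[1..<n+1] ! i = b" "[1..<n+1] ! j = a"
    using sub2_idx[OF h] by blast
  then have "j < n" by (simp only: length_upt)
  then have "1 + i < n + 1" "1 + j < n + 1" using \<open>i < j\<close> by auto
  then have "[1..<n+1] ! i = 1 + i" "[1..<n+1] ! j = 1 + j" by (intro nth_upt; simp)+
  then show "b < a" using \<open>i < j\<close> \<open>[1..<n+1] ! i = b\<close> \<open>[1..<n+1] ! j = a\<close> by simp
qed

lemma west_no231:
  assumes d: "distinct y" and bc: "subseq [b, c] y" and ca: "subseq [c, a] y"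
    and ab: "a < b" "b < c" and w: "west y = [1..<n+1]"
  shows False
proof -
  let ?T = "[[2,1]] :: nat list list"
  obtain ib ic where i1: "ib < ic" "ic < length y" "y ! ib = b" "y ! ic = c" using sub2_idx[OF bc] by blast
  obtain ic' ia where i2: "ic' < ia" "ia < length y" "y ! ic' = c" "y ! ia = a" using sub2_idx[OF ca] by blast
  have "ic' = ic" using d i1 i2 nth_eq_iff_index_eq[OF d, of ic' ic] by auto
  have dy: "distinct (y @ [])" using d by simp
  have nb: "b \<notin> set (St ?T y [] ic)"
  proof
    assume b: "b \<in> set (St ?T y [] ic)"
    obtain rest where W: "St ?T y [] ic = c # rest"
      using top_St[of ic y ?T "[]"] i1 by (metis list.collapse)
    then have "b \<in> set rest" using b ab by auto
    then have "subseq [c, b] (St ?T y [] ic)" using W by (simp add: subseq_singleton_left)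
    then have "contains (St ?T y [] ic) [2,1]" unfolding c21 using ab by blast
    moreover have "avoids_all ?T (St ?T y [] ic)" using i1 by (intro St_valid) auto
    ultimately show False unfolding avoids_all_def by simp
  qed
  have "b \<notin> set (drop (Suc ic) y)"
    using d i1 nth_notin_drop[OF d, of ib ic] by auto
  then have "b \<notin> set (St ?T y [] ia)" using St_out[OF nb] i1 i2 \<open>ic' = ic\<close> by auto
  then have "subseq [b, a] (stk ?T y [])" using Lab[OF dy, of ib ia ?T] i1 i2 \<open>ic' = ic\<close> by auto
  then have "subseq [b, a] [1..<n+1]" using w unfolding west_def sT_def by simp
  then have "b < a" by (rule sub2_sorted)
  then show False using ab by simp
qed



abbreviation T0 :: "nat list list" where "T0 \<equiv> [[1,2,3],[3,2,1]]"

lemma T0_len2: "\<forall>p\<in>set T0. 2 \<le> length p" by simp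
lemma T0_len3: "\<forall>p\<in>set T0. 3 \<le> length p" by simp

lemma St_mem_idx: "j < length x \<Longrightarrow> e \<in> set (St T x [] j) \<Longrightarrow> \<exists>i\<le>j. x ! i = e"
proof -
  assume a: "j < length x" "e \<in> set (St T x [] j)"
  then have "e \<in> set (take (Suc j) x)" using set_St[of j x T "[]"] by auto
  then obtain i where "i < length (take (Suc j) x)" "take (Suc j) x ! i = e" by (metis in_set_conv_nth)
  then show ?thesis by (intro exI[of _ i]) auto
qed

lemma LabA: "distinct x \<Longrightarrow> i < j \<Longrightarrow> j < length x \<Longrightarrow> x ! i \<in> set (St T x [] j) \<Longrightarrow> subseq [x ! j, x ! i] (stk T x [])"
  using Lab[of x "[]" i j T] by simp

lemma LabB: "distinct x \<Longrightarrow> i < j \<Longrightarrow> j < length x \<Longrightarrow> x ! i \<notin> set (St T x [] j) \<Longrightarrow> subseq [x ! i, x ! j] (stk T x [])"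
  using Lab[of x "[]" i j T] by simp

lemma case2:
  assumes d: "distinct x" and qp: "q < p" "p < length x"
    and notin: "x ! q \<notin> set (St T0 x [] p)"
    and minq: "\<forall>i\<le>p. i \<noteq> q \<longrightarrow> x ! q < x ! i"
    and maxp: "\<forall>i<length x. x ! i \<le> x ! p"
  shows "\<exists>u1 u2. subseq [u1, x ! p] (stk T0 x []) \<and> subseq [x ! p, u2] (stk T0 x []) \<and> u2 < u1 \<and> u1 < x ! p"
proof -
  define S where "S = St T0 x []"
  define m where "m = x ! q"
  have dx: "distinct (x @ [])" using d by simp
  have Sq: "S q = m # tl (S q)" using top_St[of q x T0 "[]"] qp unfolding S_def m_def
    by (metis list.collapse order.strict_trans)
  define U where "U = tl (S q)"
  have dSq: "distinct (S q)" unfolding S_def using qp d by (intro distinct_St) auto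
  have vSq: "valid (S q)" unfolding S_def using qp by (intro St_valid) auto
  have Ugt: "\<forall>u\<in>set U. m < u"
  proof
    fix u assume u: "u \<in> set U"
    then have "u \<in> set (S q)" unfolding U_def by (metis list.set_sel(2) list.sel(2) Sq)
    then obtain i where i: "i \<le> q" "x ! i = u" using St_mem_idx[where j=q and x=x and T=T0 and e=u] qp unfolding S_def by auto
    have "u \<noteq> m" using dSq Sq u unfolding U_def by (metis distinct.simps(2))
    then have "i \<noteq> q" using i unfolding m_def by auto
    then show "m < u" using minq i qp unfolding m_def by auto
  qed
  define P where "P = (\<lambda>j. q < j \<and> j \<le> p \<and> m \<notin> set (S j))"
  have Pp: "P p" unfolding P_def using qp notin unfolding S_def m_def by auto
  define j where "j = (LEAST j. P j)"
  have Pj: "P j" unfolding j_def using Pp by (rule LeastI)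
  have before: "\<forall>j'. q \<le> j' \<and> j' < j \<longrightarrow> m \<in> set (S j')"
  proof (intro allI impI)
    fix j' assume j': "q \<le> j' \<and> j' < j"
    show "m \<in> set (S j')"
    proof (cases "j' = q")
      case True then show ?thesis using Sq by (metis list.set_intros(1))
    next
      case False
      then have "\<not> P j'" using j' unfolding j_def by (metis not_less_Least)
      then show ?thesis using j' Pj False unfolding P_def by auto
    qed
  qed
  obtain j0 where j0: "j = Suc j0" using Pj unfolding P_def by (cases j) auto
  have "\<exists>T'. S j0 = T' @ m # U"
    unfolding S_def m_def U_def
    using St_stay[OF d, of q j0 T0 U] before Pj j0 qp Sq unfolding P_def S_def m_def U_def by auto
  then obtain T' where T': "S j0 = T' @ m # U" by blast
  define a where "a = x ! j"
  define k where "k = pc T0 a (S j0)"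
  have Sj: "S j = a # drop k (T' @ m # U)"
    using St_rec[of j0 x T0 "[]"] Pj qp j0 T' unfolding S_def a_def k_def P_def by auto
  have kT: "length T' < k"
  proof (rule ccontr)
    assume "\<not> length T' < k"
    then have "m \<in> set (drop k (T' @ m # U))" by auto
    then show False using Sj Pj unfolding P_def by auto
  qed
  have nv: "\<not> valid (a # m # U)"
    using pc_min[of "length T'" T0 a "S j0"] kT T' unfolding k_def by simp
  have ma: "m < a" using minq Pj unfolding P_def a_def m_def by auto
  have dU: "distinct U" using dSq Sq unfolding U_def by (metis distinct.simps(2))
  obtain u1 u2 where U: "U = [u1, u2]" "u2 < u1" "u1 < a"
    using PL1[OF ma Ugt dU _ nv] vSq Sq unfolding U_def by auto
  have vSj: "valid (S j)" unfolding S_def using Pj qp unfolding P_def by (intro St_valid) auto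
  have "k \<noteq> Suc (length T')"
  proof
    assume "k = Suc (length T')"
    then have "S j = [a, u1, u2]" using Sj U by simp
    moreover have "\<not> valid [a, u1, u2]" unfolding valid_iff using U by blast
    ultimately show False using vSj by simp
  qed
  then obtain r where "k = Suc (Suc (length T' + r))" using kT
    by (metis less_iff_Suc_add not_less_eq Suc_lessI add_Suc_right)
  then have "S j = a # drop r [u2]" using Sj U by simp
  then have u1j: "u1 \<notin> set (S j)" using U by (cases r) auto
  have "u1 \<in> set (S q)" using Sq U unfolding U_def by (metis list.set_intros)
  then obtain i1 where i1: "i1 \<le> q" "x ! i1 = u1" using St_mem_idx[where j=q and x=x and T=T0 and e=u1] qp unfolding S_def by auto
  have "u1 \<notin> set (drop (Suc j) x)" using i1 nth_notin_drop[OF d, of i1 j] Pj qp unfolding P_def by auto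
  then have "u1 \<notin> set (S p)" using St_out[of u1 T0 x "[]" j p] u1j Pj qp unfolding S_def P_def by auto
  then have s1: "subseq [u1, x ! p] (stk T0 x [])"
    using Lab[OF dx, of i1 p T0] i1 qp unfolding S_def by auto
  have "last (S q) = x ! 0" unfolding S_def using qp by (intro St_last) auto
  then have u20: "u2 = x ! 0" using Sq U unfolding U_def by (metis last.simps list.distinct(1))
  have "last (S p) = x ! 0" unfolding S_def using qp by (intro St_last) auto
  moreover have "S p \<noteq> []" using top_St[of p x T0 "[]"] qp unfolding S_def by auto
  ultimately have "x ! 0 \<in> set (S p)" by (metis last_in_set)
  then have s2: "subseq [x ! p, u2] (stk T0 x [])"
    using Lab[OF dx, of 0 p T0] u20 qp unfolding S_def by auto
  have "a \<le> x ! p" using maxp Pj qp unfolding a_def P_def by auto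
  then show ?thesis using s1 s2 U by (intro exI[of _ u1] exI[of _ u2]) auto
qed

lemma card_S_small:
  assumes "length S \<le> 2" "(5::nat) \<le> n"
  shows "\<exists>e. 2 \<le> e \<and> e < n \<and> e \<notin> set S"
proof (rule ccontr)
  assume "\<not> ?thesis"
  then have "{2..<n} \<subseteq> set S" by auto
  then have "card {2..<n} \<le> card (set S)" by (intro card_mono) auto
  also have "\<dots> \<le> length S" by (rule card_length)
  finally show False using assms by simp
qed

lemma case1:
  assumes d: "distinct x" and sx: "set x = {1..n}" and lx: "length x = n" and n5: "5 \<le> n"
    and pn: "p < n" "x ! p = n" and m: "m = 1 \<or> m = 2" and mS: "m \<in> set (St T0 x [] p)"
    and no231: "\<And>a b c. subseq [b, c] (stk T0 x []) \<Longrightarrow> subseq [c, a] (stk T0 x []) \<Longrightarrow> a < b \<Longrightarrow> b < c \<Longrightarrow> False"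
  shows False
proof -
  define S where "S = St T0 x []"
  define y where "y = stk T0 x []"
  have dx: "distinct (x @ [])" using d by simp
  have xr: "\<And>i. i < n \<Longrightarrow> 1 \<le> x ! i \<and> x ! i \<le> n" using sx lx by (metis atLeastAtMost_iff nth_mem)
  have Sp: "S p = n # tl (S p)" using top_St[of p x T0 "[]"] pn lx unfolding S_def by (metis list.collapse)
  define R where "R = tl (S p)"
  have dSp: "distinct (S p)" unfolding S_def using pn lx d by (intro distinct_St) auto
  have vSp: "valid (S p)" unfolding S_def using pn lx by (intro St_valid) auto
  have dR: "distinct R" using dSp Sp unfolding R_def by (metis distinct.simps(2))
  have Rlt: "\<forall>s\<in>set R. s < n"
  proof
    fix s assume s: "s \<in> set R"
    then have "s \<in> set (S p)" using Sp unfolding R_def by (metis list.set_intros(2))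
    then have "s \<in> set x" using set_St[of p x T0 "[]"] pn lx unfolding S_def by (auto dest: in_set_takeD)
    moreover have "s \<noteq> n" using dSp Sp s unfolding R_def by (metis distinct.simps(2))
    ultimately show "s < n" using sx by auto
  qed
  have PR: "length R \<le> 2" "\<forall>s1 s2. R = [s1, s2] \<longrightarrow> s1 < s2"
    using PL2[OF Rlt dR] vSp Sp unfolding R_def by auto
  have mn: "m \<noteq> n" using m n5 by auto
  have "m \<in> set (n # R)" using mS Sp unfolding R_def S_def by simp
  then have mR: "m \<in> set R" using mn by simp
  obtain im where im: "im \<le> p" "x ! im = m" using St_mem_idx[where j=p and x=x and T=T0 and e=m] mS pn lx by auto
  have imp: "im < p" using im pn m n5 by (cases "im = p") auto
  have sNm: "subseq [n, m] y"
    using Lab[OF dx, of im p T0] im imp pn lx mS unfolding y_def by auto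
  show False
  proof (cases "\<forall>j'. p \<le> j' \<and> j' < n \<longrightarrow> n \<in> set (S j')")
    case allin: True
    obtain e where e: "2 \<le> e" "e < n" "e \<notin> set R" using card_S_small[OF PR(1) n5] by blast
    have "e \<noteq> m" using e mR by auto
    then have em: "m < e" using e m by auto
    have "e \<in> set x" using sx e by auto
    then obtain i where i: "i < n" "x ! i = e" using lx by (metis in_set_conv_nth)
    have "i \<noteq> p" using i e pn by auto
    have "subseq [e, n] y"
    proof (cases "p < i")
      case True
      then have "x ! p \<in> set (S i)" using allin i pn by auto
      then show ?thesis using Lab[OF dx, of p i T0] True i pn lx unfolding y_def S_def by auto
    next
      case False
      then have "i < p" using \<open>i \<noteq> p\<close> by auto
      have "x ! i \<notin> set (S p)" using e i Sp unfolding R_def by (metis set_ConsD less_irrefl)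
      then show ?thesis using Lab[OF dx, of i p T0] \<open>i < p\<close> i pn lx unfolding y_def S_def by auto
    qed
    then show False using no231[of e n m] sNm em e unfolding y_def by auto
  next
    case False
    define P where "P = (\<lambda>j. p \<le> j \<and> j < n \<and> n \<notin> set (S j))"
    have "\<exists>j. P j" using False unfolding P_def by auto
    define j where "j = (LEAST j. P j)"
    have Pj: "P j" unfolding j_def using \<open>\<exists>j. P j\<close> by (metis LeastI)
    have "n \<in> set (S p)" using Sp by (metis list.set_intros(1))
    then have pj: "p < j" using Pj unfolding P_def by (cases "j = p") auto
    have bef: "\<forall>j'. p \<le> j' \<and> j' \<le> j - 1 \<longrightarrow> x ! p \<in> set (S j')"
    proof (intro allI impI)
      fix j' assume j': "p \<le> j' \<and> j' \<le> j - 1"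
      then have "j' < j" using pj by auto
      then have "\<not> P j'" unfolding j_def by (rule not_less_Least)
      then show "x ! p \<in> set (S j')" using j' Pj pn unfolding P_def by auto
    qed
    have stp: "St T0 x [] p = x ! p # R" using Sp pn unfolding S_def R_def by simp
    have "\<exists>T'. St T0 x [] (j - 1) = T' @ x ! p # R"
    proof (rule St_stay[OF d])
      show "p \<le> j - 1" "j - 1 < length x" using pj Pj lx unfolding P_def by auto
      show "\<forall>j'. p \<le> j' \<and> j' \<le> j - 1 \<longrightarrow> x ! p \<in> set (St T0 x [] j')" using bef unfolding S_def .
      show "St T0 x [] p = x ! p # R" by (rule stp)
    qed
    then obtain T' where T': "S (j - 1) = T' @ n # R" using pn unfolding S_def by auto
    define a where "a = x ! j"
    define k where "k = pc T0 a (S (j - 1))"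
    have Sj: "S j = a # drop k (T' @ n # R)"
      using St_rec[of "j - 1" x T0 "[]"] Pj pj lx T' unfolding S_def a_def k_def P_def by auto
    have kT: "length T' < k"
    proof (rule ccontr)
      assume "\<not> length T' < k"
      then have "n \<in> set (drop k (T' @ n # R))" by auto
      then show False using Sj Pj unfolding P_def by auto
    qed
    have nv: "\<not> valid (a # n # R)"
      using pc_min[of "length T'" T0 a "S (j - 1)"] kT T' unfolding k_def by simp
    have "x ! j \<noteq> x ! p" using nth_eq_iff_index_eq[OF d, of j p] Pj pj pn lx unfolding P_def by auto
    then have an: "a < n" "1 \<le> a" using xr[of j] Pj pn unfolding a_def P_def by auto
    obtain s1 s2 where R2: "R = [s1, s2]" "a < s1" "s1 < s2"
      using PL3[OF Rlt dR _ an(1) nv] vSp Sp unfolding R_def by auto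
    have a1: "a = 1" and s12: "s1 = 2" using R2 mR m an by auto
    have sN1: "subseq [n, 1] y"
    proof -
      have "x ! p \<notin> set (S j)" using Pj pn unfolding P_def by auto
      then show ?thesis using Lab[OF dx, of p j T0] pj Pj pn lx a1 unfolding y_def S_def a_def P_def by auto
    qed
    have dy: "distinct y" unfolding y_def using d by (metis mset_stk distinct_append append_Nil2 mset_append mset_eq_imp_distinct_iff)
    have sy: "set y = set x" unfolding y_def by (simp add: set_stk)
    show False
    proof (cases "\<exists>e. subseq [e, n] y \<and> e \<noteq> 1")
      case True
      then obtain e where e: "subseq [e, n] y" "e \<noteq> 1" by blast
      obtain i0 j0 where "i0 < j0" "j0 < length y" "y ! i0 = e" using sub2_idx[OF e(1)] by blast
      then have "e \<in> set y" using nth_mem[of i0 y] by auto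
      then have "1 \<le> e" "e \<le> n" using sy sx by auto
      moreover have "e \<noteq> n" using sub2_neq[OF dy e(1)] .
      ultimately show False using no231[of e n 1] e sN1 unfolding y_def by auto
    next
      case False
      then have H: "\<And>e. subseq [e, n] y \<Longrightarrow> e = 1" by blast
      have jp: "j = Suc p"
      proof (rule ccontr)
        assume "j \<noteq> Suc p"
        then have "Suc p < j" using pj by auto
        then have "x ! p \<in> set (S (Suc p))" using bef by auto
        moreover have "Suc p < length x" using \<open>Suc p < j\<close> Pj lx unfolding P_def by auto
        ultimately have "subseq [x ! Suc p, x ! p] y" using LabA[OF d, of p "Suc p" T0] unfolding y_def S_def by simp
        then have "subseq [x ! Suc p, n] y" using pn by simp
        then have "x ! Suc p = 1" by (rule H)
        then have "x ! Suc p = x ! j" using a1 unfolding a_def by simp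
        moreover have "j < length x" using Pj lx unfolding P_def by simp
        ultimately show False using \<open>Suc p < j\<close> \<open>Suc p < length x\<close> nth_eq_iff_index_eq[OF d, of "Suc p" j] by simp
      qed
      have small: "\<forall>i<p. x ! i \<in> set R"
      proof (intro allI impI)
        fix i assume i: "i < p"
        show "x ! i \<in> set R"
        proof (rule ccontr)
          assume "x ! i \<notin> set R"
          moreover have "x ! i \<noteq> n" using i pn lx d nth_eq_iff_index_eq[OF d, of i p] by auto
          ultimately have "x ! i \<notin> set (S p)" using Sp unfolding R_def by (metis set_ConsD)
          then have "subseq [x ! i, x ! p] y" using LabB[OF d, of i p T0] i pn lx unfolding y_def S_def by simp
          then have "subseq [x ! i, n] y" using pn by simp
          then have "x ! i = 1" by (rule H)
          then have "x ! i = x ! j" using a1 unfolding a_def by simp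
          moreover have "j < length x" using Pj lx unfolding P_def by simp
          ultimately show False using i pj nth_eq_iff_index_eq[OF d, of i j] by simp
        qed
      qed
      have "p \<le> 2"
      proof -
        have "set (take p x) \<subseteq> set R" using small pn lx by (auto simp: in_set_conv_nth)
        then have "card (set (take p x)) \<le> card (set R)" by (intro card_mono) auto
        moreover have "card (set (take p x)) = p" using d pn lx by (simp add: distinct_card)
        moreover have "card (set R) \<le> 2" using R2 by (simp add: card_length)
        ultimately show ?thesis by simp
      qed
      have Sp3: "S p = [n, 2, s2]" using Sp R2 s12 unfolding R_def by simp
      have s2gt: "2 < s2" using R2 s12 by simp
      have pc1: "pc T0 1 [n, 2, s2] = 2"
      proof -
        have w1: "subseq [1, 2, s2] [1, n, 2, s2]" using n5 by simp
        have "\<exists>u v t. subseq [u,v,t] [1, n, 2, s2] \<and> u < v \<and> v < t"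
          using w1 s2gt by (intro exI[of _ 1] exI[of _ 2] exI[of _ s2]) simp
        then have "\<not> valid [1, n, 2, s2]" unfolding valid_iff by blast
        moreover have "\<exists>u v t. subseq [u,v,t] [1, 2, s2] \<and> u < v \<and> v < t"
          using s2gt by (intro exI[of _ 1] exI[of _ 2] exI[of _ s2]) simp
        then have "\<not> valid [1, 2, s2]" unfolding valid_iff by blast
        moreover have "valid [1, s2]" by (rule valid_short) simp
        ultimately show ?thesis by simp
      qed
      have spl: "Suc p < length x" using Pj jp lx unfolding P_def by simp
      have "St T0 x [] (Suc p) = x ! Suc p # drop (pc T0 (x ! Suc p) (St T0 x [] p)) (St T0 x [] p)"
        by (rule St_rec[OF spl])
      then have Sj2: "S j = [1, s2]" using jp a1 Sp3 pc1 unfolding S_def a_def by simp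
      have jn: "Suc j < n" using jp \<open>p \<le> 2\<close> n5 by simp
      define c where "c = x ! Suc j"
      have cnot: "c \<notin> set (S p)"
      proof
        assume "c \<in> set (S p)"
        then obtain i where "i \<le> p" "x ! i = c" using St_mem_idx[where j=p and x=x and T=T0 and e=c] pn lx unfolding S_def by auto
        then show False using nth_eq_iff_index_eq[OF d, of i "Suc j"] jn jp lx unfolding c_def by auto
      qed
      have "c \<noteq> 1" using nth_eq_iff_index_eq[OF d, of j "Suc j"] jn lx a1 unfolding c_def a_def by auto
      moreover have "1 \<le> c" using xr[of "Suc j"] jn unfolding c_def by auto
      ultimately have c2: "2 < c" using cnot Sp3 by auto
      have s21: "1 < s2" using s2gt by simp
      have v1: "valid [1, s2]" by (rule valid_short) simp
      have vc: "valid [c, 1, s2]" unfolding valid_cons[of c] using c2 s21 v1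
        by (auto simp: sub2_2)
      have Sj3: "S (Suc j) = [c, 1, s2]" using St_rec[of j x T0 "[]"] jn lx Sj2 vc unfolding S_def c_def by simp
      obtain i2 where i2: "i2 \<le> p" "x ! i2 = 2" using St_mem_idx[where j=p and x=x and T=T0 and e=2] pn lx Sp3 unfolding S_def by auto
      have n2: "x ! i2 \<notin> set (St T0 x [] (Suc j))" using Sj3 c2 s2gt i2 unfolding S_def by auto
      have "i2 < Suc j" using i2 jp by simp
      have "subseq [x ! i2, x ! Suc j] y" using LabB[OF d \<open>i2 < Suc j\<close> _ n2] jn lx unfolding y_def by simp
      then have "subseq [2, c] y" using i2 unfolding c_def by simp
      moreover have "x ! j \<in> set (St T0 x [] (Suc j))" using Sj3 a1 unfolding S_def a_def by simp
      then have "subseq [x ! Suc j, x ! j] y" using LabA[OF d, of j "Suc j" T0] jn lx unfolding y_def by simp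
      then have "subseq [c, 1] y" using a1 unfolding c_def a_def by simp
      ultimately show False using no231[of 2 c 1] c2 unfolding y_def by auto
    qed
  qed
qed



lemma ind_eq: "distinct x \<Longrightarrow> i < length x \<Longrightarrow> x ! i = v \<Longrightarrow> ind x v = i"
  unfolding ind_def by (rule the_equality) (auto simp: nth_eq_iff_index_eq)

theorem lemma4p4:
  fixes n :: nat and x :: "nat list"
  assumes "n \<ge> 5"
    and "x \<in> Sort n [1,2,3] [3,2,1]"
  shows "ind x n < min (ind x 1) (ind x 2)"
proof -
  have d: "distinct x" and sx: "set x = {1..n}" and w: "west (sT T0 x) = [1..<n+1]"
    using assms(2) unfolding Sort_def is_perm_def by auto
  have lx: "length x = n" using distinct_card[OF d] sx by simp
  define y where "y = stk T0 x []"
  have dy: "distinct y" unfolding y_def using d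
    by (metis mset_stk distinct_append append_Nil2 mset_append mset_eq_imp_distinct_iff)
  have wy: "west y = [1..<n+1]" using w unfolding y_def sT_def .
  have no231: "\<And>a b c. subseq [b, c] (stk T0 x []) \<Longrightarrow> subseq [c, a] (stk T0 x []) \<Longrightarrow> a < b \<Longrightarrow> b < c \<Longrightarrow> False"
    using west_no231[OF dy _ _ _ _ wy] unfolding y_def by blast
  have mem: "\<And>v. 1 \<le> v \<Longrightarrow> v \<le> n \<Longrightarrow> \<exists>i<n. x ! i = v"
  proof -
    fix v :: nat assume "1 \<le> v" "v \<le> n"
    then have "v \<in> set x" using sx by auto
    then show "\<exists>i<n. x ! i = v" using lx by (auto simp: in_set_conv_nth)
  qed
  obtain p where p: "p < n" "x ! p = n" using mem[of n] assms(1) by auto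
  obtain i1 where i1: "i1 < n" "x ! i1 = 1" using mem[of 1] assms(1) by auto
  obtain i2 where i2: "i2 < n" "x ! i2 = 2" using mem[of 2] assms(1) by auto
  have ip: "ind x n = p" "ind x 1 = i1" "ind x 2 = i2" using ind_eq[OF d] p i1 i2 lx by auto
  have ne: "i1 \<noteq> p" "i2 \<noteq> p" using p i1 i2 assms(1) by auto
  have inx: "\<And>i. i < n \<Longrightarrow> x ! i \<in> {1..n}" using sx lx nth_mem[of _ x] by auto
  have maxp: "\<forall>i<length x. x ! i \<le> x ! p" using inx p lx by auto
  have ge1: "\<And>i. i < n \<Longrightarrow> 1 \<le> x ! i" using inx by auto
  have "\<not> (i1 < p \<or> i2 < p)"
  proof
    assume bad: "i1 < p \<or> i2 < p"
    show False
    proof (cases "1 \<in> set (St T0 x [] p) \<or> 2 \<in> set (St T0 x [] p)")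
      case True
      then obtain m where m: "m = 1 \<or> m = 2" "m \<in> set (St T0 x [] p)" by blast
      show False by (rule case1[OF d sx lx assms(1) p(1) p(2) m(1) m(2) no231])
    next
      case False
      show False
      proof (cases "i1 < p")
        case True
        have "\<forall>i\<le>p. i \<noteq> i1 \<longrightarrow> x ! i1 < x ! i"
        proof (intro allI impI)
          fix i assume "i \<le> p" "i \<noteq> i1"
          then have "x ! i \<noteq> 1" using nth_eq_iff_index_eq[OF d, of i i1] i1 p lx by auto
          then show "x ! i1 < x ! i" using ge1[of i] \<open>i \<le> p\<close> p i1 by auto
        qed
        then obtain u1 u2 where "subseq [u1, x ! p] (stk T0 x [])" "subseq [x ! p, u2] (stk T0 x [])" "u2 < u1" "u1 < x ! p"
          using case2[OF d True _ _ _ maxp] p lx False i1 by auto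
        then show False using no231 by blast
      next
        case False
        then have "i2 < p" "p < i1" using bad ne by auto
        have "\<forall>i\<le>p. i \<noteq> i2 \<longrightarrow> x ! i2 < x ! i"
        proof (intro allI impI)
          fix i assume "i \<le> p" "i \<noteq> i2"
          then have "x ! i \<noteq> 2" using nth_eq_iff_index_eq[OF d, of i i2] i2 p lx by auto
          moreover have "x ! i \<noteq> 1" using nth_eq_iff_index_eq[OF d, of i i1] i1 p lx \<open>p < i1\<close> \<open>i \<le> p\<close> by auto
          ultimately show "x ! i2 < x ! i" using ge1[of i] \<open>i \<le> p\<close> p i2 by auto
        qed
        then obtain u1 u2 where "subseq [u1, x ! p] (stk T0 x [])" "subseq [x ! p, u2] (stk T0 x [])" "u2 < u1" "u1 < x ! p"
          using case2[OF d \<open>i2 < p\<close> _ _ _ maxp] p lx \<open>\<not> (1 \<in> set (St T0 x [] p) \<or> 2 \<in> set (St T0 x [] p))\<close> i2 by auto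
        then show False using no231 by blast
      qed
    qed
  qed
  then show ?thesis using ip ne by auto
qed


end
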